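(* Let $f\colon\mathbb{R}^n\to\mathbb{R}$ be convex and differentiable with $\|\nabla f(x)-\nabla f(y)\|\le L\|x-y\|$ (Euclidean norm, $L>0$), with a minimizer $x_\star$, $f_\star=f(x_\star)$. Let $\theta_{-1}=0$, $\theta_0=1$, $\theta_{k+1}>0$ with $\theta_{k+1}^2-\theta_{k+1}=\theta_k^2$ for $k\ge0$, and $\varphi_k>0$ with $\varphi_k^2-\varphi_k=2\theta_{k-1}^2$ for $k\ge0$. Given $x_0$, let $y_0=\tilde x_0=x_0$ and for $k\ge0$: \[ y_{k+1}=x_k-\tfrac1L\nabla f(x_k),\quad x_{k+1}=y_{k+1}+\tfrac{\theta_k-1}{\theta_{k+1}}(y_{k+1}-y_k)+\tfrac{\theta_k}{\theta_{k+1}}(y_{k+1}-x_k),\quad \tilde x_{k+1}=y_{k+1}+\tfrac{\theta_k-1}{\varphi_{k+1}}(y_{k+1}-y_k)+\tfrac{\theta_k}{\varphi_{k+1}}(y_{k+1}-x_k). \] Then for $k=0,1,\dots$, \[ f(\tilde x_k)-f_\star\le\frac{L\|x_0-x_\star\|^2}{2\varphi_k^2}=\frac{L\|x_0-x_\star\|^2}{(k+\zeta+1/\sqrt2)^2}-\frac{L\|x_0-x_\star\|^2\log k}{(k+\zeta+1/\sqrt2)^3}+o\!\left(\frac1{k^3}\right), \] where $\zeta$ is the constant defined in the context (the asymptotic expansion refers to $k\to\infty$).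
   Context: For this sequence $\{\theta_k\}$ the limit $\zeta:=\lim_{k\to\infty}\big(2\theta_k-k-1-\tfrac12\log k\big)$ exists, with $\zeta\approx0.646$. $\log$ is the natural logarithm. *)

theory Defs
  imports "HOL-Analysis.Analysis" "HOL-Library.Landau_Symbols"
begin

definition zeta_of :: "(nat \<Rightarrow> real) \<Rightarrow> real" where
  "zeta_of \<theta> = lim (\<lambda>k. 2 * \<theta> k - real k - 1 - ln (real k) / 2)"

end

theory Submission
  imports Defs "HOL-Real_Asymp.Real_Asymp"
begin

lemma line_deriv:
  fixes f :: "'a::euclidean_space \<Rightarrow> real"
  assumes grad: "\<And>z. (f has_derivative (\<lambda>h. grad z \<bullet> h)) (at z)"
  shows "((\<lambda>t. f (x + t *\<^sub>R d)) has_real_derivative (grad (x + t *\<^sub>R d) \<bullet> d)) (at t)"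
proof -
  have 1: "((\<lambda>t. x + t *\<^sub>R d) has_derivative (\<lambda>h. h *\<^sub>R d)) (at t)"
    by (auto intro!: derivative_eq_intros)
  have "((\<lambda>t. f (x + t *\<^sub>R d)) has_derivative (\<lambda>h. grad (x + t *\<^sub>R d) \<bullet> (h *\<^sub>R d))) (at t)"
    using has_derivative_compose[OF 1 grad] by (simp add: o_def)
  then show ?thesis
    by (rule has_derivative_imp_has_field_derivative) (simp add: inner_scaleR_right)
qed

lemma descent:
  fixes f :: "'a::euclidean_space \<Rightarrow> real"
  assumes grad: "\<And>z. (f has_derivative (\<lambda>h. grad z \<bullet> h)) (at z)"
    and lip: "\<And>u v. norm (grad u - grad v) \<le> L * norm (u - v)"
  shows "f y \<le> f x + grad x \<bullet> (y - x) + L / 2 * norm (y - x) ^ 2"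
proof -
  define d where "d = y - x"
  define h where "h = (\<lambda>t. f (x + t *\<^sub>R d) - t * (grad x \<bullet> d) - L / 2 * t^2 * norm d ^ 2)"
  have "h 0 \<ge> h 1"
  proof (rule DERIV_nonpos_imp_nonincreasing[of 0 1 h])
    fix t :: real assume t: "0 \<le> t" "t \<le> 1"
    have D: "(h has_real_derivative (grad (x + t *\<^sub>R d) \<bullet> d - grad x \<bullet> d - L / 2 * (2 * t) * norm d ^ 2)) (at t)"
      unfolding h_def
      by (auto intro!: derivative_eq_intros line_deriv[OF grad] simp: power2_eq_square)
    have "grad (x + t *\<^sub>R d) \<bullet> d - grad x \<bullet> d = (grad (x + t *\<^sub>R d) - grad x) \<bullet> d"
      by (simp add: inner_diff_left)
    also have "\<dots> \<le> norm (grad (x + t *\<^sub>R d) - grad x) * norm d"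
      by (rule Cauchy_Schwarz_ineq2[THEN order_trans[OF abs_ge_self]])
    also have "\<dots> \<le> L * norm (t *\<^sub>R d) * norm d"
      using lip[of "x + t *\<^sub>R d" x] by (intro mult_right_mono) auto
    also have "\<dots> = L / 2 * (2 * t) * norm d ^ 2"
      using t by (simp add: power2_eq_square)
    finally show "\<exists>y. (h has_real_derivative y) (at t) \<and> y \<le> 0"
      using D by (intro exI[of _ "grad (x + t *\<^sub>R d) \<bullet> d - grad x \<bullet> d - L / 2 * (2 * t) * norm d ^ 2"]) auto
  qed simp
  then show ?thesis
    by (simp add: h_def d_def algebra_simps)
qed

lemma tangent:
  fixes f :: "'a::euclidean_space \<Rightarrow> real"
  assumes conv: "convex_on UNIV f"
    and grad: "\<And>z. (f has_derivative (\<lambda>h. grad z \<bullet> h)) (at z)"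
  shows "f y \<ge> f x + grad x \<bullet> (y - x)"
proof -
  define d where "d = y - x"
  define g where "g = (\<lambda>t::real. f (x + t *\<^sub>R d))"
  have cg: "convex_on UNIV g"
  proof (rule convex_onI)
    fix s a b :: real assume "s > 0" "s < 1"
    have "x + ((1 - s) *\<^sub>R a + s *\<^sub>R b) *\<^sub>R d = (1 - s) *\<^sub>R (x + a *\<^sub>R d) + s *\<^sub>R (x + b *\<^sub>R d)"
      by (simp add: algebra_simps)
    then show "g ((1 - s) *\<^sub>R a + s *\<^sub>R b) \<le> (1 - s) * g a + s * g b"
      unfolding g_def using convex_onD[OF conv, of s "x + a *\<^sub>R d" "x + b *\<^sub>R d"] \<open>s > 0\<close> \<open>s < 1\<close>
      by auto
  qed simp
  have "g 1 - g 0 \<ge> (grad (x + 0 *\<^sub>R d) \<bullet> d) * (1 - 0)"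
    by (rule convex_on_imp_above_tangent[OF cg]) (use line_deriv[OF grad, of x d 0] in \<open>auto simp: g_def\<close>)
  then show ?thesis by (simp add: g_def d_def)
qed

lemma cocoercive:
  fixes f :: "'a::euclidean_space \<Rightarrow> real"
  assumes conv: "convex_on UNIV f"
    and grad: "\<And>z. (f has_derivative (\<lambda>h. grad z \<bullet> h)) (at z)"
    and Lpos: "L > 0"
    and lip: "\<And>u v. norm (grad u - grad v) \<le> L * norm (u - v)"
  shows "f a \<ge> f b + grad b \<bullet> (a - b) + 1 / (2 * L) * norm (grad a - grad b) ^ 2"
proof -
  define G where "G = grad a - grad b"
  define w where "w = a - (1 / L) *\<^sub>R G"
  have 1: "f w \<le> f a + grad a \<bullet> (w - a) + L / 2 * norm (w - a) ^ 2"
    by (rule descent[OF grad lip])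
  have 2: "f w \<ge> f b + grad b \<bullet> (w - b)"
    by (rule tangent[OF conv grad])
  have e1: "grad b \<bullet> (w - b) = grad b \<bullet> (a - b) - (1 / L) * (grad b \<bullet> G)"
    by (simp add: w_def inner_diff_right)
  have e2: "grad a \<bullet> (w - a) = - (1 / L) * (grad a \<bullet> G)"
    by (simp add: w_def)
  have e3: "L / 2 * norm (w - a) ^ 2 = 1 / (2 * L) * norm G ^ 2"
    using Lpos by (simp add: w_def power2_eq_square field_simps)
  have e4: "grad a \<bullet> G - grad b \<bullet> G = norm G ^ 2"
    by (simp add: G_def power2_norm_eq_inner inner_diff_left)
  have "f b + grad b \<bullet> (a - b) \<le> f a - (1 / L) * (grad a \<bullet> G - grad b \<bullet> G) + 1 / (2 * L) * norm G ^ 2"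
    using 1 2 e1 e2 e3 by (simp add: algebra_simps)
  also have "\<dots> = f a - 1 / (2 * L) * norm G ^ 2"
    using Lpos e4 by (simp add: field_simps)
  finally show ?thesis by (simp add: G_def)
qed

lemma grad_min_zero:
  fixes f :: "'a::euclidean_space \<Rightarrow> real"
  assumes grad: "\<And>z. (f has_derivative (\<lambda>h. grad z \<bullet> h)) (at z)"
    and Lpos: "L > 0"
    and lip: "\<And>u v. norm (grad u - grad v) \<le> L * norm (u - v)"
    and minim: "\<And>z. f xs \<le> f z"
  shows "grad xs = 0"
proof -
  define w where "w = xs - (1 / L) *\<^sub>R grad xs"
  have "f w \<le> f xs + grad xs \<bullet> (w - xs) + L / 2 * norm (w - xs) ^ 2"
    by (rule descent[OF grad lip])
  also have "\<dots> = f xs - 1 / (2 * L) * norm (grad xs) ^ 2"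
    using Lpos by (simp add: w_def power2_eq_square field_simps power2_norm_eq_inner[symmetric])
  finally have "1 / (2 * L) * norm (grad xs) ^ 2 \<le> 0"
    using minim[of w] by linarith
  then have "norm (grad xs) ^ 2 \<le> 0"
    using Lpos by (simp add: divide_le_0_iff)
  then show ?thesis by simp
qed

lemma step_real:
  fixes L c a fp fxk fs Gp Gxk GK GG KK Gz Gs N :: real
  assumes L: "L > 0" and c: "c > 0" and a: "a = c^2 - c" and a0: "a \<ge> 0"
   and s1: "fxk \<ge> fp + (Gxk - Gp) + 1/(2*L)*(KK - 2*GK + GG)"
   and s2: "fs \<ge> fp + (Gs - Gp) + 1/(2*L)*GG"
   and V: "c*Gp - c*Gxk + c/L*GK = Gz - Gxk + GK/L"
  shows "2*c^2*(fp - fs - GG/(2*L)) + L/2*(N - 4*c/L*(Gz - Gs) + 4*c^2/L^2*GG)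
     \<le> 2*a*(fxk - fs - KK/(2*L)) + L/2*N"
proof -
  have e: "(2*a*(fxk - fs - KK/(2*L)) + L/2*N) - (2*c^2*(fp - fs - GG/(2*L)) + L/2*(N - 4*c/L*(Gz - Gs) + 4*c^2/L^2*GG))
     = 2*a*(fxk - (fp + (Gxk - Gp) + 1/(2*L)*(KK - 2*GK + GG))) + 2*c*(fs - (fp + (Gs - Gp) + 1/(2*L)*GG))
       - 2*c*((c*Gp - c*Gxk + c/L*GK) - (Gz - Gxk + GK/L))"
    using L unfolding a by (simp add: field_simps power2_eq_square)
  have "0 \<le> 2*a*(fxk - (fp + (Gxk - Gp) + 1/(2*L)*(KK - 2*GK + GG))) + 2*c*(fs - (fp + (Gs - Gp) + 1/(2*L)*GG))"
    using a0 c s1 s2 by (intro add_nonneg_nonneg mult_nonneg_nonneg) auto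
  then show ?thesis using e V by simp
qed

lemma final_real:
  fixes L c a fp fxk fs Gp Gxk GK GG KK Gz Gs N :: real
  assumes L: "L > 0" and c: "c > 0" and a: "2*a = c^2 - c" and a0: "a \<ge> 0"
   and s1: "fxk \<ge> fp + (Gxk - Gp) + 1/(2*L)*(KK - 2*GK + GG)"
   and s2: "fs \<ge> fp + (Gs - Gp) + 1/(2*L)*GG"
   and V: "c*Gp - c*Gxk + c/L*GK = Gz - Gxk + GK/L"
   and W: "c^2*GG - 2*c*L*(Gz - Gs) + L^2*N \<ge> 0"
  shows "c^2*(fp - fs) \<le> 2*a*(fxk - fs - KK/(2*L)) + L/2*N"
proof -
  have e: "(2*a*(fxk - fs - KK/(2*L)) + L/2*N) - c^2*(fp - fs)
     = 2*a*(fxk - (fp + (Gxk - Gp) + 1/(2*L)*(KK - 2*GK + GG))) + c*(fs - (fp + (Gs - Gp) + 1/(2*L)*GG))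
       - c*((c*Gp - c*Gxk + c/L*GK) - (Gz - Gxk + GK/L)) + 1/(2*L)*(c^2*GG - 2*c*L*(Gz - Gs) + L^2*N)"
  proof -
    have "c^2 = 2*a + c" using a by simp
    then show ?thesis
    using L by (simp add: field_simps power2_eq_square)
  qed
  have t1: "0 \<le> 2*a*(fxk - (fp + (Gxk - Gp) + 1/(2*L)*(KK - 2*GK + GG)))"
    using a0 s1 by (intro mult_nonneg_nonneg) auto
  have t2: "0 \<le> c*(fs - (fp + (Gs - Gp) + 1/(2*L)*GG))"
    using c s2 by (intro mult_nonneg_nonneg) auto
  have t3: "0 \<le> 1/(2*L)*(c^2*GG - 2*c*L*(Gz - Gs) + L^2*N)"
    using W L by simp
  note t = add_nonneg_nonneg[OF add_nonneg_nonneg[OF t1 t2] t3]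
  then show ?thesis using e V t by simp
qed
lemma step_vec:
  fixes p gp xk gk zn xs :: "'a::real_inner" and fp fxk fs L c a :: real
  assumes L: "L > 0" and c: "c > 0" and a: "a = c^2 - c" and a0: "a \<ge> 0"
   and s1: "fxk \<ge> fp + gp \<bullet> (xk - p) + 1/(2*L) * norm (gk - gp)^2"
   and s2: "fs \<ge> fp + gp \<bullet> (xs - p) + 1/(2*L) * norm gp ^ 2"
   and V: "c *\<^sub>R (p - (xk - (1/L) *\<^sub>R gk)) = zn - (xk - (1/L) *\<^sub>R gk)"
  shows "2*c^2*(fp - fs - norm gp ^ 2/(2*L)) + L/2 * norm (zn - (2*c/L) *\<^sub>R gp - xs)^2
     \<le> 2*a*(fxk - fs - norm gk ^ 2/(2*L)) + L/2 * norm (zn - xs)^2"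
proof -
  have V': "c*(gp \<bullet> p) - c*(gp \<bullet> xk) + c/L*(gp \<bullet> gk) = gp \<bullet> zn - gp \<bullet> xk + (gp \<bullet> gk)/L"
    using arg_cong[OF V, of "inner gp"] by (simp add: inner_simps algebra_simps)
  have n1: "norm (gk - gp)^2 = gk \<bullet> gk - 2*(gp \<bullet> gk) + gp \<bullet> gp"
    by (simp add: power2_norm_eq_inner inner_simps inner_commute)
  have n2: "norm (zn - (2*c/L) *\<^sub>R gp - xs)^2 = norm (zn - xs)^2 - 4*c/L*(gp \<bullet> zn - gp \<bullet> xs) + 4*c^2/L^2*(gp \<bullet> gp)"
    unfolding power2_norm_eq_inner using L by (simp add: inner_simps inner_commute power2_eq_square field_simps)
  have n3: "norm gp ^ 2 = gp \<bullet> gp" "norm gk ^ 2 = gk \<bullet> gk"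
    by (simp_all add: power2_norm_eq_inner)
  show ?thesis
    using step_real[OF L c a a0, where fp=fp and Gxk="gp \<bullet> xk" and Gp="gp \<bullet> p" and KK="gk \<bullet> gk"
        and GK="gp \<bullet> gk" and GG="gp \<bullet> gp" and fxk=fxk and fs=fs and Gs="gp \<bullet> xs" and Gz="gp \<bullet> zn"
        and N="norm (zn - xs)^2"] s1 s2 V' n1 n2 n3
    by (simp add: inner_simps)
qed

lemma final_vec:
  fixes p gp xk gk zn xs :: "'a::real_inner" and fp fxk fs L c a :: real
  assumes L: "L > 0" and c: "c > 0" and a: "2*a = c^2 - c" and a0: "a \<ge> 0"
   and s1: "fxk \<ge> fp + gp \<bullet> (xk - p) + 1/(2*L) * norm (gk - gp)^2"
   and s2: "fs \<ge> fp + gp \<bullet> (xs - p) + 1/(2*L) * norm gp ^ 2"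
   and V: "c *\<^sub>R (p - (xk - (1/L) *\<^sub>R gk)) = zn - (xk - (1/L) *\<^sub>R gk)"
  shows "c^2*(fp - fs) \<le> 2*a*(fxk - fs - norm gk ^ 2/(2*L)) + L/2 * norm (zn - xs)^2"
proof -
  have V': "c*(gp \<bullet> p) - c*(gp \<bullet> xk) + c/L*(gp \<bullet> gk) = gp \<bullet> zn - gp \<bullet> xk + (gp \<bullet> gk)/L"
    using arg_cong[OF V, of "inner gp"] by (simp add: inner_simps algebra_simps)
  have n1: "norm (gk - gp)^2 = gk \<bullet> gk - 2*(gp \<bullet> gk) + gp \<bullet> gp"
    by (simp add: power2_norm_eq_inner inner_simps inner_commute)
  have n2: "norm (c *\<^sub>R gp - L *\<^sub>R (zn - xs))^2 = c^2*(gp \<bullet> gp) - 2*c*L*(gp \<bullet> zn - gp \<bullet> xs) + L^2*norm (zn - xs)^2"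
    unfolding power2_norm_eq_inner using L by (simp add: inner_simps inner_commute power2_eq_square field_simps)
  have n3: "norm gp ^ 2 = gp \<bullet> gp" "norm gk ^ 2 = gk \<bullet> gk"
    by (simp_all add: power2_norm_eq_inner)
  have W: "c^2*(gp \<bullet> gp) - 2*c*L*(gp \<bullet> zn - gp \<bullet> xs) + L^2*norm (zn - xs)^2 \<ge> 0"
    using n2[symmetric] by simp
  show ?thesis
    using final_real[OF L c a a0, where fp=fp and Gxk="gp \<bullet> xk" and Gp="gp \<bullet> p" and KK="gk \<bullet> gk"
        and GK="gp \<bullet> gk" and GG="gp \<bullet> gp" and fxk=fxk and fs=fs and Gs="gp \<bullet> xs" and Gz="gp \<bullet> zn"
        and N="norm (zn - xs)^2"] s1 s2 V' n1 W n3
    by (simp add: inner_simps)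
qed

lemma ogm_bound:
  fixes f :: "'a::euclidean_space \<Rightarrow> real"
    and grad :: "'a \<Rightarrow> 'a"
    and L :: real
    and xs :: 'a
    and \<theta> \<phi> :: "nat \<Rightarrow> real"
    and x y xt :: "nat \<Rightarrow> 'a"
  assumes conv: "convex_on UNIV f"
    and grad: "\<And>z. (f has_derivative (\<lambda>h. grad z \<bullet> h)) (at z)"
    and Lpos: "L > 0"
    and lip: "\<And>u v. norm (grad u - grad v) \<le> L * norm (u - v)"
    and minim: "\<And>z. f xs \<le> f z"
    and th0: "\<theta> 0 = 1"
    and thpos: "\<And>k. \<theta> (Suc k) > 0"
    and threc: "\<And>k. \<theta> (Suc k) ^ 2 - \<theta> (Suc k) = \<theta> k ^ 2"
    and phpos: "\<And>k. \<phi> k > 0"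
    and ph0: "\<phi> 0 ^ 2 - \<phi> 0 = 2 * 0 ^ 2"
    and phrec: "\<And>k. \<phi> (Suc k) ^ 2 - \<phi> (Suc k) = 2 * \<theta> k ^ 2"
    and y0: "y 0 = x 0"
    and xt0: "xt 0 = x 0"
    and yrec: "\<And>k. y (Suc k) = x k - (1 / L) *\<^sub>R grad (x k)"
    and xrec: "\<And>k. x (Suc k) = y (Suc k)
                 + ((\<theta> k - 1) / \<theta> (Suc k)) *\<^sub>R (y (Suc k) - y k)
                 + (\<theta> k / \<theta> (Suc k)) *\<^sub>R (y (Suc k) - x k)"
    and xtrec: "\<And>k. xt (Suc k) = y (Suc k)
                 + ((\<theta> k - 1) / \<phi> (Suc k)) *\<^sub>R (y (Suc k) - y k)
                 + (\<theta> k / \<phi> (Suc k)) *\<^sub>R (y (Suc k) - x k)"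
  shows "f (xt k) - f xs \<le> L * norm (x 0 - xs) ^ 2 / (2 * \<phi> k ^ 2)"
proof -
  have Q: "\<And>a b. f a \<ge> f b + grad b \<bullet> (a - b) + 1 / (2 * L) * norm (grad a - grad b) ^ 2"
    by (rule cocoercive[OF conv grad Lpos lip])
  have g0: "grad xs = 0"
    by (rule grad_min_zero[OF grad Lpos lip minim])
  define z where "z k = \<theta> k *\<^sub>R x k - (\<theta> k - 1) *\<^sub>R y k" for k
  have Z: "z (Suc k) = y (Suc k) + (\<theta> k - 1) *\<^sub>R (y (Suc k) - y k) + \<theta> k *\<^sub>R (y (Suc k) - x k)" for k
  proof -
    have "\<theta> (Suc k) *\<^sub>R x (Suc k) = \<theta> (Suc k) *\<^sub>R y (Suc k) + (\<theta> k - 1) *\<^sub>R (y (Suc k) - y k)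
           + \<theta> k *\<^sub>R (y (Suc k) - x k)"
      using thpos[of k] by (subst xrec) (simp add: scaleR_right_distrib)
    then show ?thesis unfolding z_def by (simp add: algebra_simps)
  qed
  have Zrec: "z (Suc k) = z k - (2 * \<theta> k / L) *\<^sub>R grad (x k)" for k
    unfolding Z using Lpos by (simp add: z_def yrec algebra_simps) (simp flip: scaleR_add_left)
  have Xrel: "\<theta> (Suc k) *\<^sub>R (x (Suc k) - (x k - (1 / L) *\<^sub>R grad (x k))) = z (Suc k) - (x k - (1 / L) *\<^sub>R grad (x k))" for k
    unfolding yrec[symmetric] z_def by (simp add: algebra_simps)
  have XTrel: "\<phi> (Suc k) *\<^sub>R (xt (Suc k) - (x k - (1 / L) *\<^sub>R grad (x k))) = z (Suc k) - (x k - (1 / L) *\<^sub>R grad (x k))" for k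
  proof -
    have "\<phi> (Suc k) *\<^sub>R xt (Suc k) = \<phi> (Suc k) *\<^sub>R y (Suc k) + (\<theta> k - 1) *\<^sub>R (y (Suc k) - y k)
           + \<theta> k *\<^sub>R (y (Suc k) - x k)"
      using phpos[of "Suc k"] by (subst xtrec) (simp add: scaleR_right_distrib)
    then show ?thesis unfolding yrec[symmetric] Z by (simp add: algebra_simps)
  qed
  define U where "U k = 2 * \<theta> k ^ 2 * (f (x k) - f xs - norm (grad (x k)) ^ 2 / (2 * L))
      + L / 2 * norm (z (Suc k) - xs) ^ 2" for k
  have U0: "U 0 \<le> L / 2 * norm (x 0 - xs) ^ 2"
  proof -
    define g where "g = grad (x 0)"
    have z1: "z (Suc 0) - xs = (x 0 - xs) - (2 / L) *\<^sub>R g"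
      unfolding Zrec by (simp add: z_def th0 g_def)
    have q: "f xs \<ge> f (x 0) + g \<bullet> (xs - x 0) + 1 / (2 * L) * (g \<bullet> g)"
      using Q[where a=xs and b="x 0"] g0 by (simp add: g_def power2_norm_eq_inner)
    have n: "norm ((x 0 - xs) - (2 / L) *\<^sub>R g) ^ 2 = norm (x 0 - xs) ^ 2 - 4 / L * (g \<bullet> (x 0 - xs)) + 4 / L^2 * (g \<bullet> g)"
      unfolding power2_norm_eq_inner using Lpos
      by (simp add: inner_simps inner_commute power2_eq_square field_simps)
    have "U 0 = L / 2 * norm (x 0 - xs) ^ 2 + 2 * (f (x 0) - f xs - g \<bullet> (x 0 - xs) + 1 / (2 * L) * (g \<bullet> g))"
      unfolding U_def z1 n using Lpos
      by (simp add: th0 g_def[symmetric] power2_norm_eq_inner field_simps power2_eq_square)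
        (simp add: dot_square_norm power2_eq_square)
    also have "\<dots> \<le> L / 2 * norm (x 0 - xs) ^ 2"
      using q Lpos by (simp add: inner_simps inner_commute field_simps)
    finally show ?thesis .
  qed
  have Ustep: "U (Suc k) \<le> U k" for k
  proof -
    have thk: "\<theta> k ^ 2 = \<theta> (Suc k) ^ 2 - \<theta> (Suc k)" using threc[of k] by simp
    have s2: "f xs \<ge> f (x (Suc k)) + grad (x (Suc k)) \<bullet> (xs - x (Suc k)) + 1 / (2 * L) * norm (grad (x (Suc k))) ^ 2"
      using Q[where a=xs and b="x (Suc k)"] g0 by simp
    show ?thesis
      using step_vec[OF Lpos thpos[of k] thk zero_le_power2[of "\<theta> k"] Q[where a="x k" and b="x (Suc k)"] s2 Xrel[of k]]
      unfolding U_def Zrec[of "Suc k"] by simp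
  qed
  have Umono: "U k \<le> U 0" for k
    by (induction k) (use Ustep order_trans in blast)+
  show ?thesis
  proof (cases k)
    case 0
    have p1: "\<phi> 0 = 1"
      using ph0 phpos[of 0] by (simp add: power2_eq_square)
    have "f (x 0) \<le> f xs + grad xs \<bullet> (x 0 - xs) + L / 2 * norm (x 0 - xs) ^ 2"
      by (rule descent[OF grad lip])
    then show ?thesis using 0 p1 xt0 g0 by simp
  next
    case (Suc m)
    have a: "2 * \<theta> m ^ 2 = \<phi> (Suc m) ^ 2 - \<phi> (Suc m)" using phrec[of m] by simp
    have s2: "f xs \<ge> f (xt (Suc m)) + grad (xt (Suc m)) \<bullet> (xs - xt (Suc m)) + 1 / (2 * L) * norm (grad (xt (Suc m))) ^ 2"
      using Q[where a=xs and b="xt (Suc m)"] g0 by simp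
    have "\<phi> (Suc m) ^ 2 * (f (xt (Suc m)) - f xs) \<le> U m"
      using final_vec[OF Lpos phpos[of "Suc m"] a zero_le_power2[of "\<theta> m"] Q[where a="x m" and b="xt (Suc m)"] s2 XTrel[of m]]
      unfolding U_def by simp
    also have "\<dots> \<le> L / 2 * norm (x 0 - xs) ^ 2" using Umono[of m] U0 by simp
    finally have "\<phi> (Suc m) ^ 2 * (f (xt (Suc m)) - f xs) \<le> L / 2 * norm (x 0 - xs) ^ 2" .
    then show ?thesis
      using Suc phpos[of "Suc m"] by (simp add: field_simps)
  qed
qed

lemma theta_facts:
  fixes \<theta> :: "nat \<Rightarrow> real"
  assumes th0: "\<theta> 0 = 1"
    and thpos: "\<And>k. \<theta> (Suc k) > 0"
    and threc: "\<And>k. \<theta> (Suc k) ^ 2 - \<theta> (Suc k) = \<theta> k ^ 2"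
  shows "\<theta> k \<ge> 1"
    and "2 * real k + 4 \<le> 4 * \<theta> k"
    and "1 / (4 * \<theta> k + 1) \<le> 2 * \<theta> (Suc k) - 2 * \<theta> k - 1"
    and "2 * \<theta> (Suc k) - 2 * \<theta> k - 1 \<le> 1 / (4 * \<theta> k)"
proof -
  have step: "1 / (2 * t + 1) \<le> 2 * \<theta> (Suc j) - t - 1 \<and> 2 * \<theta> (Suc j) - t - 1 \<le> 1 / (2 * t)"
    if t: "t = 2 * \<theta> j" "t > 0" for j t
  proof -
    define u where "u = 2 * \<theta> (Suc j) - 1"
    have th1: "\<theta> (Suc j) > 1"
    proof -
      have "\<theta> (Suc j) * (\<theta> (Suc j) - 1) > 0"
        using threc[of j] t by (simp add: power2_eq_square algebra_simps)
      then show ?thesis using thpos[of j] by (simp add: zero_less_mult_iff)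
    qed
    have u2: "u ^ 2 = t ^ 2 + 1"
      using threc[of j] t unfolding u_def by (simp add: power2_eq_square algebra_simps)
    have upos: "u > 0" using th1 by (simp add: u_def)
    have ut: "u \<ge> t"
    proof (rule ccontr)
      assume "\<not> u \<ge> t"
      then have "u ^ 2 < t ^ 2" using upos by (intro power_strict_mono) auto
      then show False using u2 by simp
    qed
    have ut1: "u \<le> t + 1"
    proof (rule ccontr)
      assume "\<not> u \<le> t + 1"
      then have "(t + 1) ^ 2 < u ^ 2" using t by (intro power_strict_mono) auto
      then show False using u2 t by (simp add: power2_eq_square algebra_simps)
    qed
    have d: "(u - t) * (u + t) = 1" using u2 by (simp add: power2_eq_square algebra_simps)
    have dd: "u - t = 1 / (u + t)" using d ut t by (simp add: field_simps)
    have "1 / (2 * t + 1) \<le> 1 / (u + t)"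
      using ut ut1 t by (intro divide_left_mono) auto
    moreover have "1 / (u + t) \<le> 1 / (2 * t)"
      using ut ut1 t by (intro divide_left_mono) auto
    ultimately show ?thesis using dd by (simp add: u_def)
  qed
  have ge1: "\<theta> k \<ge> 1" for k
  proof (cases k)
    case 0 then show ?thesis using th0 by simp
  next
    case (Suc j)
    have "\<theta> (Suc j) * (\<theta> (Suc j) - 1) \<ge> 0"
      using threc[of j] by (simp add: power2_eq_square algebra_simps)
    then show ?thesis using thpos[of j] Suc by (simp add: zero_le_mult_iff)
  qed
  then show "\<theta> k \<ge> 1" .
  have st: "1 / (4 * \<theta> k + 1) \<le> 2 * \<theta> (Suc k) - 2 * \<theta> k - 1 \<and> 2 * \<theta> (Suc k) - 2 * \<theta> k - 1 \<le> 1 / (4 * \<theta> k)" for k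
    using step[of "2 * \<theta> k" k] ge1[of k] by simp
  then show "1 / (4 * \<theta> k + 1) \<le> 2 * \<theta> (Suc k) - 2 * \<theta> k - 1"
    and "2 * \<theta> (Suc k) - 2 * \<theta> k - 1 \<le> 1 / (4 * \<theta> k)" by auto
  show "2 * real k + 4 \<le> 4 * \<theta> k"
  proof (induction k)
    case 0 then show ?case using th0 by simp
  next
    case (Suc k)
    have "0 \<le> 1 / (4 * \<theta> k + 1)" using ge1[of k] by simp
    then have "2 * \<theta> (Suc k) \<ge> 2 * \<theta> k + 1" using st[of k, THEN conjunct1] by linarith
    then show ?case using Suc by simp
  qed
qed

lemma sqrt_step:
  fixes k :: nat
  shows "2 * sqrt (real k + 1) + 1 / (2 * (real k + 2)) \<le> 2 * sqrt (real k + 2)"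
proof -
  define a where "a = sqrt (real k + 1)"
  define b where "b = sqrt (real k + 2)"
  have a2: "a ^ 2 = real k + 1" and b2: "b ^ 2 = real k + 2" by (simp_all add: a_def b_def)
  have a0: "a \<ge> 0" and b1: "b \<ge> 1" by (simp_all add: a_def b_def)
  have ab: "a \<le> b" by (simp add: a_def b_def)
  have "(b - a) * (b + a) = 1" using a2 b2 by (simp add: power2_eq_square algebra_simps)
  then have ba: "b - a = 1 / (b + a)" using a0 b1 by (simp add: field_simps)
  have "1 / (2 * b) \<le> 1 / (b + a)" using ab a0 b1 by (intro divide_left_mono) auto
  moreover have "1 / (2 * b ^ 2) \<le> 1 / (2 * b)"
    using b1 by (intro divide_left_mono) (auto simp: power2_eq_square)
  ultimately have "1 / (2 * b ^ 2) \<le> b - a" using ba by linarith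
  then have "1 / (2 * (real k + 2)) \<le> b - a" using b2 by simp
  moreover have "1 / (2 * (real k + 2)) \<ge> 0" by simp
  ultimately show ?thesis unfolding a_def[symmetric] b_def[symmetric] by linarith
qed

lemma theta_upper:
  fixes \<theta> :: "nat \<Rightarrow> real"
  assumes th0: "\<theta> 0 = 1"
    and thpos: "\<And>k. \<theta> (Suc k) > 0"
    and threc: "\<And>k. \<theta> (Suc k) ^ 2 - \<theta> (Suc k) = \<theta> k ^ 2"
  shows "2 * \<theta> k \<le> real k + 1 + 2 * sqrt (real k + 1)"
proof (induction k)
  case 0 then show ?case using th0 by simp
next
  case (Suc k)
  note F = theta_facts[OF th0 thpos threc]
  have "1 / (4 * \<theta> k) \<le> 1 / (2 * (real k + 2))"
    using F(2)[of k] by (intro divide_left_mono) auto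
  then have "2 * \<theta> (Suc k) \<le> 2 * \<theta> k + 1 + 1 / (2 * (real k + 2))"
    using F(4)[of k] by linarith
  also have "\<dots> \<le> real k + 2 + 2 * sqrt (real k + 1) + 1 / (2 * (real k + 2))"
    using Suc by simp
  also have "\<dots> \<le> real k + 2 + 2 * sqrt (real k + 2)"
    using sqrt_step[of k] by simp
  finally show ?case by (simp add: add_ac)
qed

lemma lin_chain1: "E = a - l / 2 \<Longrightarrow> a \<le> A \<Longrightarrow> A \<le> B \<Longrightarrow> B \<le> C / 2 \<Longrightarrow> C \<le> l \<Longrightarrow> E \<le> (0::real)"
  by linarith

lemma lin_chain2: "E = a - l / 2 \<Longrightarrow> A \<le> a \<Longrightarrow> l \<le> C \<Longrightarrow> C / 2 = D \<Longrightarrow> - E \<le> D - (A::real)"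
  by linarith

lemma d_bound:
  fixes \<theta> :: "nat \<Rightarrow> real"
  assumes th0: "\<theta> 0 = 1"
    and thpos: "\<And>k. \<theta> (Suc k) > 0"
    and threc: "\<And>k. \<theta> (Suc k) ^ 2 - \<theta> (Suc k) = \<theta> k ^ 2"
    and j: "j \<ge> 1"
  defines "e \<equiv> (\<lambda>k. 2 * \<theta> k - real k - 1 - ln (real k) / 2)"
  shows "norm (e (Suc j) - e j) \<le> (3 + 4 * sqrt (real j + 1)) / (2 * real j * (2 * real j + 5))"
proof -
  note F = theta_facts[OF th0 thpos threc]
  have jp: "real j > 0" using j by simp
  define lnd where "lnd = ln (real (Suc j)) - ln (real j)"
  have ln_eq: "lnd = ln (1 + 1 / real j)"
  proof -
    have "lnd = ln (real (Suc j) / real j)"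
      using jp unfolding lnd_def by (subst ln_div) auto
    moreover have "real (Suc j) / real j = 1 + 1 / real j" using jp by (simp add: field_simps)
    ultimately show ?thesis by simp
  qed
  have l1: "lnd \<le> 1 / real j"
    unfolding ln_eq by (rule ln_add_one_self_le_self) simp
  have l2: "ln (real j / real (Suc j)) \<le> real j / real (Suc j) - 1"
    using jp by (intro ln_le_minus_one) simp
  have l2': "lnd \<ge> 1 / (real j + 1)"
  proof -
    have "ln (real j / real (Suc j)) = ln (real j) - ln (real (Suc j))"
      using jp by (subst ln_div) auto
    moreover have "real j / real (Suc j) - 1 = - (1 / (real j + 1))"
      by (simp add: field_simps)
    ultimately show ?thesis using l2 unfolding lnd_def by linarith
  qed
  have de: "e (Suc j) - e j = (2 * \<theta> (Suc j) - 2 * \<theta> j - 1) - lnd / 2"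
    unfolding e_def lnd_def of_nat_Suc by (simp add: field_simps)
  have u1: "1 / (4 * \<theta> j) \<le> 1 / (2 * (real j + 2))"
    using F(2)[of j] by (intro divide_left_mono) auto
  have u2: "1 / (2 * (real j + 2)) \<le> (1 / (real j + 1)) / 2"
    by (simp add: divide_simps)
  have dle: "e (Suc j) - e j \<le> 0"
    by (rule lin_chain1[OF de F(4)[of j] u1 u2 l2'])
  have u3: "(1 / real j) / 2 = 1 / (2 * real j)" by simp
  have dge: "-(e (Suc j) - e j) \<le> 1 / (2 * real j) - 1 / (4 * \<theta> j + 1)"
    by (rule lin_chain2[OF de F(3)[of j] l1 u3])
  have tp: "4 * \<theta> j + 1 > 0" using F(1)[of j] by simp
  have "1 / (2 * real j) - 1 / (4 * \<theta> j + 1) = (4 * \<theta> j + 1 - 2 * real j) / (2 * real j * (4 * \<theta> j + 1))"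
    using jp tp by (simp add: field_simps)
  also have "\<dots> \<le> (3 + 4 * sqrt (real j + 1)) / (2 * real j * (4 * \<theta> j + 1))"
    using theta_upper[OF th0 thpos threc, of j] jp tp by (intro divide_right_mono) auto
  also have "\<dots> \<le> (3 + 4 * sqrt (real j + 1)) / (2 * real j * (2 * real j + 5))"
    using F(2)[of j] jp by (intro divide_left_mono mult_left_mono mult_pos_pos) auto
  finally show ?thesis using dle dge by simp
qed

lemma e_converges:
  fixes \<theta> :: "nat \<Rightarrow> real"
  assumes th0: "\<theta> 0 = 1"
    and thpos: "\<And>k. \<theta> (Suc k) > 0"
    and threc: "\<And>k. \<theta> (Suc k) ^ 2 - \<theta> (Suc k) = \<theta> k ^ 2"
  shows "(\<lambda>k. 2 * \<theta> k - real k - 1 - ln (real k) / 2) \<longlonglongrightarrow> zeta_of \<theta>"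
proof -
  define e where "e = (\<lambda>k. 2 * \<theta> k - real k - 1 - ln (real k) / 2)"
  define d where "d = (\<lambda>j. e (Suc j) - e j)"
  define b where "b = (\<lambda>j::nat. (3 + 4 * sqrt (real j + 1)) / (2 * real j * (2 * real j + 5)))"
  have "d \<in> O(b)"
  proof (rule landau_o.bigI[where c=1])
    show "eventually (\<lambda>j. norm (d j) \<le> 1 * norm (b j)) at_top"
      using eventually_ge_at_top[of "1::nat"]
    proof eventually_elim
      case (elim j)
      have 1: "norm (d j) \<le> b j"
        using d_bound[OF th0 thpos threc elim] unfolding d_def b_def e_def by blast
      have "b j \<le> 1 * norm (b j)" by simp
      then show ?case using 1 by linarith
    qed
  qed simp
  also have "b \<in> O(\<lambda>j. real j powr (-3/2))"
    unfolding b_def by real_asymp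
  finally have dO: "d \<in> O(\<lambda>j. real j powr (-3/2))" .
  have "summable (\<lambda>j. real j powr (-3/2))"
    by (subst summable_real_powr_iff) simp
  then have "summable (\<lambda>j. norm (real j powr (-3/2)))"
    by simp
  then have sd: "summable d" by (rule summable_comparison_test_bigo[OF _ dO])
  have "(\<lambda>n. \<Sum>j<n. d j) \<longlonglongrightarrow> suminf d" by (rule summable_LIMSEQ[OF sd])
  then have "(\<lambda>n. e 0 + (\<Sum>j<n. d j)) \<longlonglongrightarrow> e 0 + suminf d" by (intro tendsto_intros)
  moreover have "\<And>n. e 0 + (\<Sum>j<n. d j) = e n"
    unfolding d_def by (simp add: sum_lessThan_telescope)
  ultimately have E: "e \<longlonglongrightarrow> e 0 + suminf d" by simp
  have Z: "zeta_of \<theta> = e 0 + suminf d"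
    unfolding zeta_of_def e_def[symmetric] using limI[OF E] .
  show ?thesis using E unfolding Z e_def .
qed

lemma phi_decomp:
  fixes \<theta> \<phi> :: "nat \<Rightarrow> real"
  assumes th0: "\<theta> 0 = 1"
    and thpos: "\<And>k. \<theta> (Suc k) > 0"
    and threc: "\<And>k. \<theta> (Suc k) ^ 2 - \<theta> (Suc k) = \<theta> k ^ 2"
    and phpos: "\<And>k. \<phi> k > 0"
    and phrec: "\<And>k. \<phi> (Suc k) ^ 2 - \<phi> (Suc k) = 2 * \<theta> k ^ 2"
  shows "0 \<le> 2 * \<phi> (Suc m) ^ 2 - (2 * \<theta> m + 1 / sqrt 2) ^ 2"
    and "2 * \<phi> (Suc m) ^ 2 - (2 * \<theta> m + 1 / sqrt 2) ^ 2 \<le> 1"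
proof -
  note F = theta_facts[OF th0 thpos threc]
  define t where "t = 2 * \<theta> m"
  define p where "p = \<phi> (Suc m)"
  define s where "s = 2 * p - 1"
  define w where "w = sqrt 2 * t"
  have t2: "t \<ge> 2" using F(1)[of m] by (simp add: t_def)
  have pr: "p ^ 2 - p = t ^ 2 / 2" using phrec[of m] by (simp add: p_def t_def power2_eq_square)
  have p1: "p > 1"
  proof -
    have "t ^ 2 / 2 > 0" using t2 by simp
    then have "p ^ 2 - p > 0" using pr by linarith
    then have "p * (p - 1) > 0" by (simp add: power2_eq_square algebra_simps)
    then show ?thesis using phpos[of "Suc m"] by (simp add: p_def zero_less_mult_iff)
  qed
  have s2: "s ^ 2 = 2 * t ^ 2 + 1" using pr by (simp add: s_def power2_eq_square algebra_simps)
  have w2: "w ^ 2 = 2 * t ^ 2" by (simp add: w_def power_mult_distrib)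
  have w0: "w \<ge> 0" using t2 by (simp add: w_def)
  have s0: "s \<ge> 0" using p1 by (simp add: s_def)
  have sw: "w \<le> s" by (rule power2_le_imp_le) (use s2 w2 s0 in simp_all)
  have sq2: "sqrt 2 \<ge> 1" by simp
  have "w \<ge> 2" using t2 sq2 unfolding w_def by (metis mult_mono mult_1 order_trans zero_le_one one_le_numeral dual_order.trans)
  then have "s ^ 2 \<le> (w + 1/2) ^ 2" using s2 w2 by (simp add: power2_eq_square algebra_simps)
  then have sw2: "s \<le> w + 1/2" by (rule power2_le_imp_le) (use w0 in simp)
  have e1: "2 * \<phi> (Suc m) ^ 2 = s + 1 + t ^ 2"
    using pr by (simp add: p_def[symmetric] s_def algebra_simps)
  have e2: "(2 * \<theta> m + 1 / sqrt 2) ^ 2 = t ^ 2 + w + 1/2"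
    unfolding t_def[symmetric] w_def
    by (simp add: power2_eq_square algebra_simps real_sqrt_mult[symmetric]) (simp add: field_simps)
  show "0 \<le> 2 * \<phi> (Suc m) ^ 2 - (2 * \<theta> m + 1 / sqrt 2) ^ 2"
    using e1 e2 sw by simp
  show "2 * \<phi> (Suc m) ^ 2 - (2 * \<theta> m + 1 / sqrt 2) ^ 2 \<le> 1"
    using e1 e2 sw2 by simp
qed

lemma expand_id:
  fixes a b d :: real assumes "b > 0" "a > 0" "a = b + d"
  shows "1 / a ^ 2 - 1 / b ^ 2 + 2 * d / b ^ 3 = (3 * b * d ^ 2 + 2 * d ^ 3) / (a ^ 2 * b ^ 3)"
proof -
  have h: "a \<noteq> 0" "b \<noteq> 0" using assms by auto
  have "1 / a ^ 2 - 1 / b ^ 2 + 2 * d / b ^ 3 = (b ^ 3 - a ^ 2 * b + 2 * d * a ^ 2) / (a ^ 2 * b ^ 3)"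
    using h by (simp add: field_simps power2_eq_square power3_eq_cube)
  also have "b ^ 3 - a ^ 2 * b + 2 * d * a ^ 2 = 3 * b * d ^ 2 + 2 * d ^ 3"
    unfolding assms(3) by (simp add: power2_eq_square power3_eq_cube algebra_simps)
  finally show ?thesis .
qed

lemma asym_main:
  fixes \<theta> \<phi> :: "nat \<Rightarrow> real" and \<zeta> :: real
  assumes th0: "\<theta> 0 = 1"
    and thpos: "\<And>k. \<theta> (Suc k) > 0"
    and threc: "\<And>k. \<theta> (Suc k) ^ 2 - \<theta> (Suc k) = \<theta> k ^ 2"
    and phpos: "\<And>k. \<phi> k > 0"
    and phrec: "\<And>k. \<phi> (Suc k) ^ 2 - \<phi> (Suc k) = 2 * \<theta> k ^ 2"
    and econv: "(\<lambda>k. 2 * \<theta> k - real k - 1 - ln (real k) / 2) \<longlonglongrightarrow> \<zeta>"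
  shows "(\<lambda>k. real k ^ 3 * (1 / (2 * \<phi> k ^ 2) - 1 / (real k + \<zeta> + 1 / sqrt 2) ^ 2
            + ln (real k) / (real k + \<zeta> + 1 / sqrt 2) ^ 3)) \<longlonglongrightarrow> 0"
proof -
  note F = theta_facts[OF th0 thpos threc]
  note PD = phi_decomp[OF th0 thpos threc phpos phrec]
  define c where "c = \<zeta> + 1 / sqrt 2"
  define A where "A m = 2 * \<theta> m + 1 / sqrt 2" for m
  define B where "B m = real m + 1 + c" for m
  define r where "r m = 2 * \<phi> (Suc m) ^ 2 - A m ^ 2" for m
  define \<delta> where "\<delta> m = A m - B m" for m
  define \<epsilon> where "\<epsilon> m = \<delta> m - ln (real m + 1) / 2" for m
  define N where "N m = real m + 1" for m
  define P1 where "P1 m = N m ^ 3 * (1 / (A m ^ 2 + r m) - 1 / A m ^ 2)" for m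
  define P2 where "P2 m = N m ^ 3 * (1 / A m ^ 2 - 1 / B m ^ 2 + 2 * \<delta> m / B m ^ 3)" for m
  define P3 where "P3 m = 2 * \<epsilon> m * (N m ^ 3 / B m ^ 3)" for m
  have r01: "0 \<le> r m" "r m \<le> 1" for m using PD[of m] by (simp_all add: r_def A_def)
  have A1: "A m \<ge> N m" for m
  proof -
    have "1 / sqrt 2 \<ge> 0" by simp
    then show ?thesis using F(2)[of m] unfolding A_def N_def by linarith
  qed
  have N0: "N m > 0" for m by (simp add: N_def)
  have eps: "\<epsilon> \<longlonglongrightarrow> 0"
  proof -
    have l: "(\<lambda>m::nat. ln (real m) - ln (real m + 1)) \<longlonglongrightarrow> 0" by real_asymp
    have "(\<lambda>m. (2 * \<theta> m - real m - 1 - ln (real m) / 2 - \<zeta>) + (ln (real m) - ln (real m + 1)) / 2) \<longlonglongrightarrow> (\<zeta> - \<zeta>) + 0 / 2"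
      by (intro tendsto_intros econv l) simp_all
    moreover have "\<epsilon> = (\<lambda>m. (2 * \<theta> m - real m - 1 - ln (real m) / 2 - \<zeta>) + (ln (real m) - ln (real m + 1)) / 2)"
      by (rule ext) (simp add: \<epsilon>_def \<delta>_def A_def B_def c_def field_simps)
    ultimately show ?thesis by simp
  qed
  have lim1: "P1 \<longlonglongrightarrow> 0"
  proof (rule Lim_null_comparison)
    show "(\<lambda>m. 1 / N m) \<longlonglongrightarrow> 0" unfolding N_def by real_asymp
    show "eventually (\<lambda>m. norm (P1 m) \<le> 1 / N m) sequentially"
    proof (intro always_eventually allI)
      fix m
      have Ap: "A m > 0" using A1[of m] N0[of m] by linarith
      have "1 / (A m ^ 2 + r m) - 1 / A m ^ 2 = - (r m / (A m ^ 2 * (A m ^ 2 + r m)))"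
      proof -
        have h1: "A m ^ 2 + r m \<noteq> 0" "A m ^ 2 \<noteq> 0" using Ap r01[of m] by (smt (verit) zero_less_power)+
        show ?thesis using h1 by (simp add: field_simps)
      qed
      then have "norm (P1 m) = N m ^ 3 * (r m / (A m ^ 2 * (A m ^ 2 + r m)))"
        using N0[of m] r01[of m] Ap by (simp add: P1_def abs_mult)
      also have "\<dots> \<le> N m ^ 3 * (1 / (A m ^ 2 * A m ^ 2))"
        using Ap r01[of m] N0[of m]
        by (intro mult_left_mono frac_le mult_left_mono mult_pos_pos) auto
      also have "\<dots> \<le> N m ^ 3 * (1 / (N m ^ 2 * N m ^ 2))"
        using Ap A1[of m] N0[of m]
        by (intro mult_left_mono divide_left_mono mult_mono power_mono mult_pos_pos) auto
      also have "\<dots> = 1 / N m"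
        using N0[of m] by (simp add: field_simps power2_eq_square power3_eq_cube)
      finally show "norm (P1 m) \<le> 1 / N m" .
    qed
  qed
  have lim3: "P3 \<longlonglongrightarrow> 0"
  proof -
    have "(\<lambda>m. N m ^ 3 / B m ^ 3) \<longlonglongrightarrow> 1" unfolding N_def B_def by real_asymp
    from tendsto_mult[OF tendsto_mult[OF tendsto_const[of 2] eps] this] show ?thesis
      unfolding P3_def[abs_def] by simp
  qed
  define D where "D m = ln (real m + 1) / 2 + 1" for m
  define G where "G m = N m ^ 3 * ((3 * B m * D m ^ 2 + 2 * D m ^ 3) / B m ^ 5)" for m
  have lim2: "P2 \<longlonglongrightarrow> 0"
  proof (rule Lim_null_comparison)
    show "G \<longlonglongrightarrow> 0" unfolding G_def N_def B_def D_def by real_asymp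
    have ev1: "eventually (\<lambda>m. \<bar>\<epsilon> m\<bar> \<le> 1) sequentially"
      using tendstoD[OF eps, of 1] by (auto elim!: eventually_mono simp: dist_real_def)
    have ev2: "eventually (\<lambda>m::nat. real m + 1 + c > 0) sequentially" by real_asymp
    have ev3: "eventually (\<lambda>m::nat. ln (real m + 1) / 2 \<ge> 1) sequentially" by real_asymp
    show "eventually (\<lambda>m. norm (P2 m) \<le> G m) sequentially"
      using ev1 ev2 ev3
    proof eventually_elim
      case (elim m)
      have Bp: "B m > 0" using elim by (simp add: B_def)
      have d0: "\<delta> m \<ge> 0" using elim by (simp add: \<epsilon>_def)
      have dD: "\<delta> m \<le> D m" using elim by (simp add: \<epsilon>_def D_def)
      have AB: "A m = B m + \<delta> m" by (simp add: \<delta>_def)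
      have Ap: "A m > 0" "A m \<ge> B m" using AB Bp d0 by auto
      have id: "1 / A m ^ 2 - 1 / B m ^ 2 + 2 * \<delta> m / B m ^ 3
          = (3 * B m * \<delta> m ^ 2 + 2 * \<delta> m ^ 3) / (A m ^ 2 * B m ^ 3)"
        by (rule expand_id[OF Bp Ap(1) AB])
      have num0: "0 \<le> 3 * B m * \<delta> m ^ 2 + 2 * \<delta> m ^ 3" using Bp d0 by simp
      have numle: "3 * B m * \<delta> m ^ 2 + 2 * \<delta> m ^ 3 \<le> 3 * B m * D m ^ 2 + 2 * D m ^ 3"
        using Bp d0 dD by (intro add_mono mult_left_mono power_mono) auto
      have denle: "B m ^ 5 \<le> A m ^ 2 * B m ^ 3"
      proof -
        have "B m ^ 2 \<le> A m ^ 2" using Ap Bp by (intro power_mono) auto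
        then have "B m ^ 2 * B m ^ 3 \<le> A m ^ 2 * B m ^ 3" using Bp by (intro mult_right_mono) auto
        then show ?thesis by (simp add: power_add[symmetric])
      qed
      define X where "X = (3 * B m * \<delta> m ^ 2 + 2 * \<delta> m ^ 3) / (A m ^ 2 * B m ^ 3)"
      define Y where "Y = (3 * B m * D m ^ 2 + 2 * D m ^ 3) / B m ^ 5"
      have x0: "0 \<le> X" unfolding X_def using num0 Bp Ap by simp
      have xy: "X \<le> Y" unfolding X_def Y_def
        using num0 numle denle Bp by (intro frac_le) auto
      have p2: "P2 m = N m ^ 3 * X" unfolding P2_def id X_def ..
      have g: "G m = N m ^ 3 * Y" unfolding G_def Y_def ..
      have nn: "0 \<le> N m ^ 3 * X" using x0 N0[of m] by simp
      have le: "N m ^ 3 * X \<le> N m ^ 3 * Y" using xy N0[of m] by (intro mult_left_mono) auto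
      show "norm (P2 m) \<le> G m"
        unfolding p2 g using nn le by (metis abs_of_nonneg real_norm_def)
    qed
  qed
  have "(\<lambda>m. P1 m + P2 m - P3 m) \<longlonglongrightarrow> 0 + 0 - 0"
    by (intro tendsto_intros lim1 lim2 lim3)
  moreover have "real (Suc m) ^ 3 * (1 / (2 * \<phi> (Suc m) ^ 2) - 1 / (real (Suc m) + \<zeta> + 1 / sqrt 2) ^ 2
            + ln (real (Suc m)) / (real (Suc m) + \<zeta> + 1 / sqrt 2) ^ 3) = P1 m + P2 m - P3 m" for m
  proof -
    have 1: "2 * \<phi> (Suc m) ^ 2 = A m ^ 2 + r m" by (simp add: r_def)
    have 2: "real (Suc m) + \<zeta> + 1 / sqrt 2 = B m" by (simp add: B_def c_def)
    have 3: "ln (real (Suc m)) = 2 * \<delta> m - 2 * \<epsilon> m" by (simp add: \<epsilon>_def add.commute)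
    have 4: "real (Suc m) = N m" by (simp add: N_def)
    show ?thesis unfolding 1 2 3 unfolding 4 P1_def P2_def P3_def
      by (simp add: divide_inverse algebra_simps)
  qed
  ultimately have "(\<lambda>m. real (Suc m) ^ 3 * (1 / (2 * \<phi> (Suc m) ^ 2) - 1 / (real (Suc m) + \<zeta> + 1 / sqrt 2) ^ 2
            + ln (real (Suc m)) / (real (Suc m) + \<zeta> + 1 / sqrt 2) ^ 3)) \<longlonglongrightarrow> 0"
    by simp
  then show ?thesis by (rule filterlim_sequentially_Suc[THEN iffD1])
qed

lemma eq_aux:
  fixes C a b c l K :: real
  shows "(C / a - (C / b - C * l / c)) / (1 / K) = C * (K * (1 / a - 1 / b + l / c))"
  by (simp add: divide_inverse algebra_simps)

theorem corollary3:
  fixes f :: "'a::euclidean_space \<Rightarrow> real"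
    and grad :: "'a \<Rightarrow> 'a"
    and L :: real
    and xs :: 'a
    and \<theta> \<phi> :: "nat \<Rightarrow> real"
    and x y xt :: "nat \<Rightarrow> 'a"
  assumes conv: "convex_on UNIV f"
    and grad: "\<And>z. (f has_derivative (\<lambda>h. grad z \<bullet> h)) (at z)"
    and Lpos: "L > 0"
    and lip: "\<And>u v. norm (grad u - grad v) \<le> L * norm (u - v)"
    and minim: "\<And>z. f xs \<le> f z"
    and th0: "\<theta> 0 = 1"
    and thpos: "\<And>k. \<theta> (Suc k) > 0"
    and threc: "\<And>k. \<theta> (Suc k) ^ 2 - \<theta> (Suc k) = \<theta> k ^ 2"
    and phpos: "\<And>k. \<phi> k > 0"
    and ph0: "\<phi> 0 ^ 2 - \<phi> 0 = 2 * 0 ^ 2"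
    and phrec: "\<And>k. \<phi> (Suc k) ^ 2 - \<phi> (Suc k) = 2 * \<theta> k ^ 2"
    and y0: "y 0 = x 0"
    and xt0: "xt 0 = x 0"
    and yrec: "\<And>k. y (Suc k) = x k - (1 / L) *\<^sub>R grad (x k)"
    and xrec: "\<And>k. x (Suc k) = y (Suc k)
                 + ((\<theta> k - 1) / \<theta> (Suc k)) *\<^sub>R (y (Suc k) - y k)
                 + (\<theta> k / \<theta> (Suc k)) *\<^sub>R (y (Suc k) - x k)"
    and xtrec: "\<And>k. xt (Suc k) = y (Suc k)
                 + ((\<theta> k - 1) / \<phi> (Suc k)) *\<^sub>R (y (Suc k) - y k)
                 + (\<theta> k / \<phi> (Suc k)) *\<^sub>R (y (Suc k) - x k)"
  shows "(\<forall>k. f (xt k) - f xs \<le> L * norm (x 0 - xs) ^ 2 / (2 * \<phi> k ^ 2))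
     \<and> (\<lambda>k. L * norm (x 0 - xs) ^ 2 / (2 * \<phi> k ^ 2)
             - (L * norm (x 0 - xs) ^ 2 / (real k + zeta_of \<theta> + 1 / sqrt 2) ^ 2
                - L * norm (x 0 - xs) ^ 2 * ln (real k)
                    / (real k + zeta_of \<theta> + 1 / sqrt 2) ^ 3))
       \<in> o(\<lambda>k. 1 / real k ^ 3)"
proof (intro conjI allI)
  fix k
  show "f (xt k) - f xs \<le> L * norm (x 0 - xs) ^ 2 / (2 * \<phi> k ^ 2)"
    using ogm_bound[OF conv grad Lpos lip minim th0 thpos threc phpos ph0 phrec y0 xt0 yrec xrec xtrec] .
next
  define C where "C = L * norm (x 0 - xs) ^ 2"
  define H where "H k = 1 / (2 * \<phi> k ^ 2) - 1 / (real k + zeta_of \<theta> + 1 / sqrt 2) ^ 2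
            + ln (real k) / (real k + zeta_of \<theta> + 1 / sqrt 2) ^ 3" for k
  have lim: "(\<lambda>k. real k ^ 3 * H k) \<longlonglongrightarrow> 0"
    unfolding H_def by (rule asym_main[OF th0 thpos threc phpos phrec e_converges[OF th0 thpos threc]])
  have eq: "(L * norm (x 0 - xs) ^ 2 / (2 * \<phi> k ^ 2)
             - (L * norm (x 0 - xs) ^ 2 / (real k + zeta_of \<theta> + 1 / sqrt 2) ^ 2
                - L * norm (x 0 - xs) ^ 2 * ln (real k)
                    / (real k + zeta_of \<theta> + 1 / sqrt 2) ^ 3)) / (1 / real k ^ 3)
         = C * (real k ^ 3 * H k)" for k
    unfolding C_def H_def by (rule eq_aux)
  show "(\<lambda>k. L * norm (x 0 - xs) ^ 2 / (2 * \<phi> k ^ 2)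
             - (L * norm (x 0 - xs) ^ 2 / (real k + zeta_of \<theta> + 1 / sqrt 2) ^ 2
                - L * norm (x 0 - xs) ^ 2 * ln (real k)
                    / (real k + zeta_of \<theta> + 1 / sqrt 2) ^ 3))
       \<in> o(\<lambda>k. 1 / real k ^ 3)"
  proof (rule smalloI_tendsto)
    show "((\<lambda>k. (L * norm (x 0 - xs) ^ 2 / (2 * \<phi> k ^ 2)
             - (L * norm (x 0 - xs) ^ 2 / (real k + zeta_of \<theta> + 1 / sqrt 2) ^ 2
                - L * norm (x 0 - xs) ^ 2 * ln (real k)
                    / (real k + zeta_of \<theta> + 1 / sqrt 2) ^ 3)) / (1 / real k ^ 3)) \<longlongrightarrow> 0) at_top"
      unfolding eq using tendsto_mult_left[OF lim, of C] by simp
    show "eventually (\<lambda>k. 1 / real k ^ 3 \<noteq> 0) at_top"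
      using eventually_gt_at_top[of "0::nat"] by eventually_elim simp
  qed
qed

end
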